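(* Let $y\in\ell^2$. Suppose that for every $q\in\mathbb Q^{<\omega}$, every rational $\varepsilon>0$ and every $m\in\omega$ there exist $n\le k$ in $\omega$ with $n\ge m$ and $k-n\ge m$ such that $\lVert (2^n y\upharpoonright[k,k+|q|)) - q\rVert_\infty<\varepsilon|q|^{-1/2}$ and $\lVert y\upharpoonright[k+|q|,\infty)\rVert_2<\varepsilon 2^{-k}$. Then $y$ is nicely hypercyclic.
   Context: $\omega=\{0,1,2,\dots\}$; $\ell^2$ is the Hilbert space of square-summable real sequences indexed by $\omega$. For a (finite or infinite) real string $s$, $\lVert s\rVert_2$ and $\lVert s\rVert_\infty$ denote its $2$-norm and sup-norm, $|s|$ its length; $y\upharpoonright[k,k+|q|)$ is regarded as a string of length $|q|$ indexed from $0$ and compared to $q$ coordinatewise; when $q$ is empty, conditions comparing an empty string to $q$ in $\lVert\cdot\rVert_\infty$ are vacuous. For nonempty $q\in\mathbb Q^{<\omega}$ and rational $\varepsilon>0$, $U_{q,\varepsilon}=\{x\in\ell^2:\lVert (x\upharpoonright|q|)-q\rVert_\infty<\varepsilon|q|^{-1/2}\text{ and }\lVert x\upharpoonright[|q|,\infty)\rVert_2<\varepsilon\}$; for $q$ empty, $U_{q,\varepsilon}=\{x:\lVert x\rVert_2<\varepsilon\}$. For $w\in\mathbb R^\omega$, $B_w(x)(i)=w(i)x(i+1)$. A function $w$ on $\omega$ is $n$-nice at $k$ if $w(i)=w(k+i)$ for all $i<n$. $B_w^k$ maps $y$ nicely into $U_{q,\varepsilon}$ if $B_w^k(y)\in U_{q,\varepsilon}$,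 $w$ is $|q|$-nice at $k$, and $\lVert y\upharpoonright[k+|q|,\infty)\rVert_2<\varepsilon 2^{-k}$. $y$ is nicely hypercyclic for $w$ if for every $U_{q,\varepsilon}$ there is $k$ such that $B_w^k$ maps $y$ nicely into $U_{q,\varepsilon}$; $y$ is nicely hypercyclic if it is nicely hypercyclic for some $w\in\{1,2\}^\omega$. *)

theory Defs
  imports "HOL-Analysis.Analysis"
begin

definition l2 :: "(nat \<Rightarrow> real) \<Rightarrow> bool" where
  "l2 x \<longleftrightarrow> summable (\<lambda>i. (x i)\<^sup>2)"

definition tail_norm :: "(nat \<Rightarrow> real) \<Rightarrow> nat \<Rightarrow> real" where
  "tail_norm x n = sqrt (\<Sum>i. (x (i + n))\<^sup>2)"

definition block_close :: "(nat \<Rightarrow> real) \<Rightarrow> nat \<Rightarrow> rat list \<Rightarrow> real \<Rightarrow> bool" where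
  "block_close x k q \<epsilon> \<longleftrightarrow>
     (\<forall>i<length q. \<bar>x (k + i) - real_of_rat (q ! i)\<bar> < \<epsilon> / sqrt (real (length q)))"

text \<open>The basic open set U_{q,eps} (for empty q this is the open eps-ball around 0).\<close>
definition U :: "rat list \<Rightarrow> real \<Rightarrow> (nat \<Rightarrow> real) set" where
  "U q \<epsilon> = {x. l2 x \<and> block_close x 0 q \<epsilon> \<and> tail_norm x (length q) < \<epsilon>}"

definition B :: "(nat \<Rightarrow> real) \<Rightarrow> (nat \<Rightarrow> real) \<Rightarrow> (nat \<Rightarrow> real)" where
  "B w x = (\<lambda>i. w i * x (i + 1))"

definition nice :: "nat \<Rightarrow> (nat \<Rightarrow> real) \<Rightarrow> nat \<Rightarrow> bool" where
  "nice n w k \<longleftrightarrow> (\<forall>i<n. w i = w (k + i))"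

definition maps_nicely :: "(nat \<Rightarrow> real) \<Rightarrow> nat \<Rightarrow> (nat \<Rightarrow> real) \<Rightarrow> rat list \<Rightarrow> real \<Rightarrow> bool" where
  "maps_nicely w k y q \<epsilon> \<longleftrightarrow>
     (B w ^^ k) y \<in> U q \<epsilon> \<and> nice (length q) w k \<and> tail_norm y (k + length q) < \<epsilon> * 2 powi (- int k)"

definition nicely_hypercyclic_for :: "(nat \<Rightarrow> real) \<Rightarrow> (nat \<Rightarrow> real) \<Rightarrow> bool" where
  "nicely_hypercyclic_for w y \<longleftrightarrow>
     (\<forall>q (\<epsilon>::rat). \<epsilon> > 0 \<longrightarrow> (\<exists>k. maps_nicely w k y q (real_of_rat \<epsilon>)))"

definition nicely_hypercyclic :: "(nat \<Rightarrow> real) \<Rightarrow> bool" where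
  "nicely_hypercyclic y \<longleftrightarrow> (\<exists>w. (\<forall>i. w i \<in> {1, 2}) \<and> nicely_hypercyclic_for w y)"

end

theory Submission
  imports Defs
begin

definition good :: "(nat \<Rightarrow> real) \<Rightarrow> rat list \<Rightarrow> rat \<Rightarrow> nat \<Rightarrow> nat \<times> nat \<Rightarrow> bool" where
  "good y q e m nk \<longleftrightarrow> (fst nk \<le> snd nk \<and> m \<le> fst nk \<and> m \<le> snd nk - fst nk
     \<and> block_close (\<lambda>i. 2 ^ fst nk * y i) (snd nk) q (real_of_rat e)
     \<and> tail_norm y (snd nk + length q) < real_of_rat e * 2 powi (- int (snd nk)))"

definition pos_eps :: "rat \<Rightarrow> rat" where
  "pos_eps e = (if e > 0 then e else 1)"

definition stepf :: "(nat \<Rightarrow> real) \<Rightarrow> nat \<Rightarrow> nat \<times> (nat \<Rightarrow> real) \<Rightarrow> nat \<times> (nat \<Rightarrow> real)" where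
  "stepf y s st = (let L = fst st; w = snd st; c = (SOME c. c \<le> L \<and> (\<Prod>j<L. w j) = 2 ^ c);
      q = fst (from_nat s :: rat list \<times> rat); e = pos_eps (snd (from_nat s :: rat list \<times> rat));
      m = L + length q + 1; nk = (SOME nk. good y q e m nk); n = fst nk; k = snd nk;
      base = (\<lambda>j. if j < L then w j else if j < L + (n - c) then 2 else 1)
     in (k + length q, (\<lambda>j. if j < k then base j else base (j - k))))"

primrec stage :: "(nat \<Rightarrow> real) \<Rightarrow> nat \<Rightarrow> nat \<times> (nat \<Rightarrow> real)" where
  "stage y 0 = (0, (\<lambda>_. 1))"
| "stage y (Suc s) = stepf y s (stage y s)"

lemma prod_block:
  fixes f :: "nat \<Rightarrow> real"
  assumes "a \<le> b" "a \<le> k" "\<forall>j. a \<le> j \<and> j < k \<longrightarrow> f j = (if j < b then 2 else 1)"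
  shows "(\<Prod>j<k. f j) = (\<Prod>j<a. f j) * 2 ^ (min k b - a)"
  using assms
proof (induction k)
  case 0
  then show ?case by simp
next
  case (Suc k)
  show ?case
  proof (cases "a = Suc k")
    case True
    then show ?thesis using Suc by simp
  next
    case False
    then have ak: "a \<le> k" using Suc by simp
    have IH: "(\<Prod>j<k. f j) = (\<Prod>j<a. f j) * 2 ^ (min k b - a)" using Suc ak by simp
    have fk: "f k = (if k < b then 2 else 1)" using Suc ak by simp
    show ?thesis
    proof (cases "k < b")
      case True
      then have "min (Suc k) b - a = Suc (min k b - a)" using ak by simp
      then show ?thesis using IH fk True by simp
    next
      case False
      then have "min (Suc k) b = min k b" by simp
      then show ?thesis using IH fk False by simp
    qed
  qed
qed

lemma prod_12:
  fixes w :: "nat \<Rightarrow> real"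
  assumes "\<forall>j. w j \<in> {1,2}"
  shows "\<exists>c\<le>L. (\<Prod>j<L. w j) = 2 ^ c"
proof (induction L)
  case 0
  then show ?case by simp
next
  case (Suc L)
  then obtain c where c: "c \<le> L" "(\<Prod>j<L. w j) = 2 ^ c" by blast
  show ?case
  proof (cases "w L = 1")
    case True
    then show ?thesis using c by (intro exI[of _ c]) auto
  next
    case False
    then have "w L = 2" using assms by auto
    then show ?thesis using c by (intro exI[of _ "Suc c"]) auto
  qed
qed


lemma step_props:
  assumes H: "\<forall>q e m. e > 0 \<longrightarrow> (\<exists>nk. good y q e m nk)"
    and W: "\<forall>j. w j \<in> {1,2}"
    and st: "stepf y s (L, w) = (L', w')"
    and fn: "from_nat s = (q, e0)"
  shows "(\<forall>j. w' j \<in> {1,2}) \<and> L < L' \<and> (\<forall>j<L. w' j = w j)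
     \<and> (\<exists>n k. good y q (pos_eps e0) (L + length q + 1) (n, k) \<and> L' = k + length q
          \<and> (\<Prod>j<k. w' j) = 2 ^ n \<and> (\<forall>i<length q. w' (k + i) = w' i))"
proof -
  define e where "e = pos_eps e0"
  have e0: "e > 0" unfolding e_def pos_eps_def by auto
  define m where "m = L + length q + 1"
  define nk where "nk = (SOME nk. good y q e m nk)"
  have g: "good y q e m nk" unfolding nk_def using H e0 by (metis someI_ex)
  define n where "n = fst nk"
  define k where "k = snd nk"
  define c where "c = (SOME c. c \<le> L \<and> (\<Prod>j<L. w j) = 2 ^ c)"
  have c: "c \<le> L \<and> (\<Prod>j<L. w j) = 2 ^ c"
    unfolding c_def using prod_12[OF W, of L] by (metis (mono_tags, lifting) someI_ex)
  define base where "base = (\<lambda>j. if j < L then w j else if j < L + (n - c) then 2 else (1::real))"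
  have w'def: "w' = (\<lambda>j. if j < k then base j else base (j - k))" and L'def: "L' = k + length q"
    using st fn unfolding stepf_def Let_def base_def n_def k_def nk_def c_def e_def m_def
    by auto
  have gnk: "good y q e m (n, k)" using g unfolding n_def k_def by simp
  then have nk1: "n \<le> k" "m \<le> n" "m \<le> k - n" unfolding good_def by auto
  have bw: "\<forall>j. base j \<in> {1,2}" using W unfolding base_def by auto
  have p1: "\<forall>j. w' j \<in> {1,2}" unfolding w'def using bw by auto
  have p2: "L < L'" using nk1 unfolding L'def m_def by auto
  have p3: "\<forall>j<L. w' j = w j" unfolding w'def base_def using nk1 m_def by auto
  have "(\<Prod>j<k. w' j) = (\<Prod>j<k. base j)" unfolding w'def by simp
  also have "\<dots> = (\<Prod>j<L. base j) * 2 ^ (min k (L + (n - c)) - L)"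
    by (rule prod_block) (use nk1 m_def in \<open>auto simp: base_def\<close>)
  also have "(\<Prod>j<L. base j) = (\<Prod>j<L. w j)" unfolding base_def by simp
  also have "min k (L + (n - c)) - L = n - c" using nk1 c m_def by auto
  finally have p4: "(\<Prod>j<k. w' j) = 2 ^ n" using c nk1 m_def
    by (simp add: power_add[symmetric])
  have p5: "\<forall>i<length q. w' (k + i) = w' i" unfolding w'def using nk1 m_def by auto
  show ?thesis using p1 p2 p3 p4 p5 gnk L'def unfolding e_def m_def by blast
qed


lemma stage_inv:
  assumes H: "\<forall>q e m. e > 0 \<longrightarrow> (\<exists>nk. good y q e m nk)"
  shows "(\<forall>j. snd (stage y s) j \<in> {1,2}) \<and> s \<le> fst (stage y s)"
proof (induction s)
  case 0
  then show ?case by simp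
next
  case (Suc s)
  obtain L w where Lw: "stage y s = (L, w)" by (cases "stage y s")
  obtain L' w' where Lw': "stepf y s (L, w) = (L', w')" by (cases "stepf y s (L, w)")
  obtain q e0 where fn: "from_nat s = ((q::rat list), (e0::rat))" by (cases "from_nat s :: rat list \<times> rat")
  have "(\<forall>j. w' j \<in> {1,2}) \<and> L < L'"
    using step_props[OF H _ Lw' fn] Suc Lw by auto
  then show ?case using Suc Lw Lw' by auto
qed

lemma stage_mono:
  assumes H: "\<forall>q e m. e > 0 \<longrightarrow> (\<exists>nk. good y q e m nk)"
    and "s \<le> t"
  shows "fst (stage y s) \<le> fst (stage y t) \<and> (\<forall>j < fst (stage y s). snd (stage y t) j = snd (stage y s) j)"
  using assms(2)
proof (induction t rule: dec_induct)
  case base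
  then show ?case by simp
next
  case (step t)
  obtain L w where Lw: "stage y t = (L, w)" by (cases "stage y t")
  obtain L' w' where Lw': "stepf y t (L, w) = (L', w')" by (cases "stepf y t (L, w)")
  obtain q e0 where fn: "from_nat t = ((q::rat list), (e0::rat))" by (cases "from_nat t :: rat list \<times> rat")
  have "L < L' \<and> (\<forall>j<L. w' j = w j)"
    using step_props[OF H _ Lw' fn] stage_inv[OF H, of t] Lw by auto
  then show ?case using step Lw Lw' by auto
qed

lemma W_agree:
  assumes H: "\<forall>q e m. e > 0 \<longrightarrow> (\<exists>nk. good y q e m nk)"
    and "j < fst (stage y s)"
  shows "snd (stage y (Suc j)) j = snd (stage y s) j"
proof (cases "s \<le> Suc j")
  case True
  then show ?thesis using stage_mono[OF H True] assms(2) by auto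
next
  case False
  then have "Suc j \<le> s" by simp
  moreover have "j < fst (stage y (Suc j))" using stage_inv[OF H, of "Suc j"] by auto
  ultimately show ?thesis using stage_mono[OF H, of "Suc j" s] by auto
qed


lemma Bpow: "(B w ^^ k) y = (\<lambda>i. (\<Prod>j<k. w (i + j)) * y (i + k))"
proof (induction k)
  case 0
  then show ?case by simp
next
  case (Suc k)
  have e: "\<And>i. (\<Prod>j<Suc k. w (i + j)) = w i * (\<Prod>j<k. w (Suc i + j))"
    unfolding prod.lessThan_Suc_shift by simp
  have "(B w ^^ Suc k) y = B w ((B w ^^ k) y)" by simp
  also have "\<dots> = B w (\<lambda>i. (\<Prod>j<k. w (i + j)) * y (i + k))" using Suc.IH by simp
  also have "\<dots> = (\<lambda>i. (\<Prod>j<Suc k. w (i + j)) * y (i + Suc k))"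
    unfolding B_def e by (rule ext) simp
  finally show ?case .
qed

lemma prod_shift_nice:
  fixes w :: "nat \<Rightarrow> real"
  assumes "\<forall>i<N. w i = w (k + i)" "\<forall>j. w j \<noteq> 0" "i \<le> N"
  shows "(\<Prod>j<k. w (i + j)) = (\<Prod>j<k. w j)"
  using assms(3)
proof (induction i)
  case 0
  then show ?case by simp
next
  case (Suc i)
  have a: "(\<Prod>j<Suc k. w (i + j)) = w i * (\<Prod>j<k. w (Suc i + j))"
    unfolding prod.lessThan_Suc_shift by simp
  have b: "(\<Prod>j<Suc k. w (i + j)) = (\<Prod>j<k. w (i + j)) * w (i + k)"
    by simp
  have c: "w (i + k) = w i" using assms(1) Suc.prems by (simp add: add.commute)
  have "w i * (\<Prod>j<k. w (Suc i + j)) = w i * (\<Prod>j<k. w j)"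
  proof -
    have "(\<Prod>j<k. w (i + j)) = (\<Prod>j<k. w j)" using Suc by simp
    then show ?thesis using a b c by (metis mult.commute)
  qed
  then show ?case using assms(2) by simp
qed

lemma prod_bound:
  fixes w :: "nat \<Rightarrow> real"
  assumes "\<forall>j. w j \<in> {1,2}"
  shows "0 < (\<Prod>j<k. w (i + j)) \<and> (\<Prod>j<k. w (i + j)) \<le> 2 ^ k"
proof (induction k)
  case 0
  then show ?case by simp
next
  case (Suc k)
  have "w (i + k) \<in> {1,2}" using assms by auto
  then show ?case using Suc by (auto intro: mult_mono)
qed


lemma maps_lemma:
  fixes w y :: "nat \<Rightarrow> real"
  assumes W: "\<forall>j. w j \<in> {1,2}" and Y: "l2 y"
    and N: "\<forall>i<length q. w i = w (k + i)"
    and P: "(\<Prod>j<k. w j) = 2 ^ n"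
    and bc: "block_close (\<lambda>i. 2 ^ n * y i) k q \<epsilon>"
    and tl: "tail_norm y (k + length q) < \<epsilon> * 2 powi (- int k)"
  shows "maps_nicely w k y q \<epsilon>"
proof -
  define Pr where "Pr = (\<lambda>i. (\<Prod>j<k. w (i + j)))"
  have By: "(B w ^^ k) y = (\<lambda>i. Pr i * y (i + k))" unfolding Pr_def by (rule Bpow)
  have Pb: "\<And>i. 0 < Pr i \<and> Pr i \<le> 2 ^ k" unfolding Pr_def using prod_bound[OF W] by blast
  have nz: "\<forall>j. w j \<noteq> 0" by (metis W empty_iff insert_iff one_neq_zero zero_neq_numeral)
  have sq: "\<And>i a. (Pr i * a)\<^sup>2 \<le> 4 ^ k * a\<^sup>2"
  proof -
    fix i a
    have "(Pr i)\<^sup>2 \<le> (2 ^ k)\<^sup>2" using Pb[of i] by (intro power_mono) auto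
    also have "(2 ^ k)\<^sup>2 = (4::real) ^ k" by (simp add: power_mult_distrib[symmetric] power_even_eq[symmetric] power_mult)
    finally show "(Pr i * a)\<^sup>2 \<le> 4 ^ k * a\<^sup>2"
      by (simp add: power_mult_distrib mult_right_mono)
  qed
  have sy: "summable (\<lambda>i. (y i)\<^sup>2)" using Y unfolding l2_def .
  have syk: "\<And>t. summable (\<lambda>i. (y (i + t))\<^sup>2)"
    using sy by (subst summable_iff_shift) 
  have l2B: "l2 ((B w ^^ k) y)"
    unfolding l2_def By
    by (rule summable_comparison_test[where g = "\<lambda>i. 4 ^ k * (y (i + k))\<^sup>2"])
       (use sq syk in \<open>auto intro: summable_mult\<close>)
  have bcB: "block_close ((B w ^^ k) y) 0 q \<epsilon>"
    unfolding block_close_def By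
  proof (intro allI impI)
    fix i assume i: "i < length q"
    have "Pr i = 2 ^ n" unfolding Pr_def using prod_shift_nice[OF N nz, of i] i P by simp
    then show "\<bar>Pr (0 + i) * y (0 + i + k) - real_of_rat (q ! i)\<bar> < \<epsilon> / sqrt (real (length q))"
      using bc i unfolding block_close_def by (simp add: add.commute)
  qed
  have tB: "tail_norm ((B w ^^ k) y) (length q) < \<epsilon>"
  proof -
    have "(\<Sum>i. (Pr (i + length q) * y (i + length q + k))\<^sup>2) \<le> (\<Sum>i. 4 ^ k * (y (i + (k + length q)))\<^sup>2)"
    proof (rule suminf_le)
      fix i show "(Pr (i + length q) * y (i + length q + k))\<^sup>2 \<le> 4 ^ k * (y (i + (k + length q)))\<^sup>2"
        using sq[of "i + length q" "y (i + length q + k)"] by (simp add: ac_simps)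
    next
      show s2: "summable (\<lambda>i. 4 ^ k * (y (i + (k + length q)))\<^sup>2)"
        using syk by (intro summable_mult) 
      show "summable (\<lambda>i. (Pr (i + length q) * y (i + length q + k))\<^sup>2)"
      proof (rule summable_comparison_test[OF _ s2])
        show "\<exists>N. \<forall>i\<ge>N. norm ((Pr (i + length q) * y (i + length q + k))\<^sup>2) \<le> 4 ^ k * (y (i + (k + length q)))\<^sup>2"
        proof (intro exI allI impI)
          fix i :: nat
          show "norm ((Pr (i + length q) * y (i + length q + k))\<^sup>2) \<le> 4 ^ k * (y (i + (k + length q)))\<^sup>2"
            using sq[of "i + length q" "y (i + length q + k)"] by (simp add: ac_simps)
        qed
      qed
    qed
    also have "\<dots> = 4 ^ k * (\<Sum>i. (y (i + (k + length q)))\<^sup>2)"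
      using syk by (rule suminf_mult)
    finally have le: "(\<Sum>i. (Pr (i + length q) * y (i + length q + k))\<^sup>2) \<le> 4 ^ k * (\<Sum>i. (y (i + (k + length q)))\<^sup>2)" .
    have "tail_norm ((B w ^^ k) y) (length q) \<le> sqrt (4 ^ k * (\<Sum>i. (y (i + (k + length q)))\<^sup>2))"
      unfolding tail_norm_def By using le by simp
    also have "\<dots> = 2 ^ k * tail_norm y (k + length q)"
      unfolding tail_norm_def real_sqrt_mult
      using real_sqrt_power[of 4 k] by simp
    also have "\<dots> < 2 ^ k * (\<epsilon> * 2 powi (- int k))"
      using tl by simp
    also have "\<dots> = \<epsilon>"
      by (simp add: power_int_minus)
    finally show ?thesis .
  qed
  have tl2: "tail_norm y (k + length q) < \<epsilon> * 2 powi (- int k)" by (rule tl)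
  show ?thesis unfolding maps_nicely_def U_def nice_def
    using l2B bcB tB tl2 N by simp
qed


theorem lemma8:
  fixes y :: "nat \<Rightarrow> real"
  assumes "l2 y"
    and "\<forall>(q::rat list) (\<epsilon>::rat) (m::nat). \<epsilon> > 0 \<longrightarrow>
          (\<exists>n k. n \<le> k \<and> m \<le> n \<and> m \<le> k - n
             \<and> block_close (\<lambda>i. 2 ^ n * y i) k q (real_of_rat \<epsilon>)
             \<and> tail_norm y (k + length q) < real_of_rat \<epsilon> * 2 powi (- int k))"
  shows "nicely_hypercyclic y"
proof -
  have H: "\<forall>q e m. e > 0 \<longrightarrow> (\<exists>nk. good y q e m nk)"
  proof (intro allI impI)
    fix q e m assume "(e::rat) > 0"
    then obtain n k where "n \<le> k \<and> m \<le> n \<and> m \<le> k - n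
             \<and> block_close (\<lambda>i. 2 ^ n * y i) k q (real_of_rat e)
             \<and> tail_norm y (k + length q) < real_of_rat e * 2 powi (- int k)"
      using assms(2) by blast
    then show "\<exists>nk. good y q e m nk" unfolding good_def by (intro exI[of _ "(n, k)"]) simp
  qed
  define W where "W = (\<lambda>j. snd (stage y (Suc j)) j)"
  have W12: "\<forall>j. W j \<in> {1,2}" unfolding W_def using stage_inv[OF H] by blast
  have "nicely_hypercyclic_for W y"
    unfolding nicely_hypercyclic_for_def
  proof (intro allI impI)
    fix q :: "rat list" and \<epsilon> :: rat assume ep: "\<epsilon> > 0"
    define s where "s = to_nat (q, \<epsilon>)"
    have fn: "from_nat s = (q, \<epsilon>)" unfolding s_def by simp
    obtain L w where Lw: "stage y s = (L, w)" by (cases "stage y s")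
    obtain L' w' where Lw': "stepf y s (L, w) = (L', w')" by (cases "stepf y s (L, w)")
    have w12: "\<forall>j. w j \<in> {1,2}" using stage_inv[OF H, of s] Lw by simp
    from step_props[OF H w12 Lw' fn] obtain n k where
      g: "good y q (pos_eps \<epsilon>) (L + length q + 1) (n, k)" and L': "L' = k + length q"
      and pr: "(\<Prod>j<k. w' j) = 2 ^ n" and nc: "\<forall>i<length q. w' (k + i) = w' i"
      by blast
    have pe: "pos_eps \<epsilon> = \<epsilon>" using ep unfolding pos_eps_def by simp
    have sS: "stage y (Suc s) = (L', w')" using Lw Lw' by simp
    have agree: "\<And>j. j < k + length q \<Longrightarrow> W j = w' j"
      unfolding W_def using W_agree[OF H, of _ "Suc s"] sS L' by simp
    have g2: "n \<le> k" using g unfolding good_def by simp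
    have N: "\<forall>i<length q. W i = W (k + i)"
      using agree nc by simp
    have P: "(\<Prod>j<k. W j) = 2 ^ n" using pr agree by simp
    show "\<exists>k. maps_nicely W k y q (real_of_rat \<epsilon>)"
      using maps_lemma[OF W12 assms(1) N P] g pe unfolding good_def by auto
  qed
  then show ?thesis unfolding nicely_hypercyclic_def using W12 by blast
qed

end
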